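(* Let $D$ be a connection on a vector bundle $E$ with curvature $\kappa$ and $E_0=\ker\kappa$. Then $D$ is exact if and only if the complex $\Gamma(E_0)\xrightarrow{D}\Gamma(\Lambda^1\otimes E)\xrightarrow{D^\wedge}\Gamma(\Lambda^2\otimes E)$ is exact. In particular, if $D^\wedge:\Lambda^1\otimes E\to\Lambda^2\otimes E$ is injective, then $D$ is exact. Conversely, if $D$ is exact and $\kappa:E\to\Lambda^2\otimes E$ is injective, then $D^\wedge:\Lambda^1\otimes E\to\Lambda^2\otimes E$ is injective.
   Context: $D:E\to\Lambda^1\otimes E$ is a linear connection on a smooth vector bundle; $D^\wedge$ is the exterior covariant derivative $\phi_b{}^\alpha\mapsto D_{[a}\phi_{b]}{}^\alpha$; $\kappa=D^\wedge\circ D$ is the curvature (a bundle homomorphism, assumed of constant rank). $D$ is called exact if every section $\phi$ of $\Lambda^1\otimes E$ such that $D^\wedge\phi=\kappa(\psi)$ for some section $\psi$ of $E$ is of the form $\phi=D\eta$ for some section $\eta$ of $E$. All statements are understood locally (on sufficiently small open sets). *)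

theory Defs
  imports "HOL-Analysis.Analysis"
begin

text \<open>Local model: an open set U in R^n (coordinates indexed by 'n) carrying the
trivial bundle E = U x R^r (fibre coordinates indexed by 'r).
Sections of E: real^'r valued; of Lambda^1 (x) E: real^'r^'n (phi $ b $ alpha);
of Lambda^2 (x) E: real^'r^'n^'n (skew in the two form indices).
A connection is D = d + Gamma with Gamma x $ a a real^'r^'r matrix.\<close>

definition partial :: "'n::finite \<Rightarrow> (real^'n \<Rightarrow> 'b::real_normed_vector) \<Rightarrow> real^'n \<Rightarrow> 'b" where
  "partial i f x = frechet_derivative f (at x) (axis i 1)"

fun Ck_on :: "nat \<Rightarrow> (real^'n::finite \<Rightarrow> 'b::real_normed_vector) \<Rightarrow> (real^'n) set \<Rightarrow> bool" where
  "Ck_on 0 f U = continuous_on U f"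
| "Ck_on (Suc k) f U = (f differentiable_on U \<and> (\<forall>i. Ck_on k (partial i f) U))"

definition smooth_on :: "(real^'n::finite \<Rightarrow> 'b::real_normed_vector) \<Rightarrow> (real^'n) set \<Rightarrow> bool" where
  "smooth_on f U = (\<forall>k. Ck_on k f U)"

definition conn :: "(real^'n::finite \<Rightarrow> real^'r::finite^'r^'n) \<Rightarrow> (real^'n \<Rightarrow> real^'r) \<Rightarrow> real^'n \<Rightarrow> real^'r^'n" where
  "conn \<Gamma> \<eta> x = (\<chi> a. partial a \<eta> x + (\<Gamma> x $ a) *v \<eta> x)"

definition conn_wedge :: "(real^'n::finite \<Rightarrow> real^'r::finite^'r^'n) \<Rightarrow> (real^'n \<Rightarrow> real^'r^'n) \<Rightarrow> real^'n \<Rightarrow> real^'r^'n^'n" where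
  "conn_wedge \<Gamma> \<phi> x = (\<chi> a b.
      (1/2) *\<^sub>R ((partial a (\<lambda>y. \<phi> y $ b) x + (\<Gamma> x $ a) *v (\<phi> x $ b))
               - (partial b (\<lambda>y. \<phi> y $ a) x + (\<Gamma> x $ b) *v (\<phi> x $ a))))"

text \<open>Curvature kappa = D^wedge o D as a bundle homomorphism E -> Lambda^2 (x) E:
 kappa_{ab} = 1/2 (d_a Gamma_b - d_b Gamma_a + Gamma_a Gamma_b - Gamma_b Gamma_a).\<close>
definition curv :: "(real^'n::finite \<Rightarrow> real^'r::finite^'r^'n) \<Rightarrow> real^'n \<Rightarrow> real^'r^'r^'n^'n" where
  "curv \<Gamma> x = (\<chi> a b. (1/2) *\<^sub>R (partial a (\<lambda>y. \<Gamma> y $ b) x - partial b (\<lambda>y. \<Gamma> y $ a) x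
        + (\<Gamma> x $ a) ** (\<Gamma> x $ b) - (\<Gamma> x $ b) ** (\<Gamma> x $ a)))"

definition curv_at :: "(real^'n::finite \<Rightarrow> real^'r::finite^'r^'n) \<Rightarrow> real^'n \<Rightarrow> real^'r \<Rightarrow> real^'r^'n^'n" where
  "curv_at \<Gamma> x v = (\<chi> a b. (curv \<Gamma> x $ a $ b) *v v)"

definition curv_const_rank :: "(real^'n::finite \<Rightarrow> real^'r::finite^'r^'n) \<Rightarrow> (real^'n) set \<Rightarrow> bool" where
  "curv_const_rank \<Gamma> U = (\<exists>k. \<forall>x\<in>U. dim (range (curv_at \<Gamma> x)) = k)"

definition exact_conn :: "(real^'n::finite \<Rightarrow> real^'r::finite^'r^'n) \<Rightarrow> (real^'n) set \<Rightarrow> bool" where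
  "exact_conn \<Gamma> U = (\<forall>V \<phi> \<psi>. open V \<and> V \<subseteq> U \<and> smooth_on \<phi> V \<and> smooth_on \<psi> V \<and>
      (\<forall>x\<in>V. conn_wedge \<Gamma> \<phi> x = curv_at \<Gamma> x (\<psi> x)) \<longrightarrow>
      (\<forall>x\<in>V. \<exists>W \<eta>. open W \<and> x \<in> W \<and> W \<subseteq> V \<and> smooth_on \<eta> W \<and>
          (\<forall>y\<in>W. conn \<Gamma> \<eta> y = \<phi> y)))"

text \<open>Exactness (locally) of Gamma(E_0) --D--> Gamma(Lambda^1 (x) E) --D^wedge--> Gamma(Lambda^2 (x) E),
 E_0 = ker kappa.\<close>
definition complex_exact :: "(real^'n::finite \<Rightarrow> real^'r::finite^'r^'n) \<Rightarrow> (real^'n) set \<Rightarrow> bool" where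
  "complex_exact \<Gamma> U = (\<forall>V \<phi>. open V \<and> V \<subseteq> U \<and> smooth_on \<phi> V \<and>
      (\<forall>x\<in>V. conn_wedge \<Gamma> \<phi> x = 0) \<longrightarrow>
      (\<forall>x\<in>V. \<exists>W \<eta>. open W \<and> x \<in> W \<and> W \<subseteq> V \<and> smooth_on \<eta> W \<and>
          (\<forall>y\<in>W. curv_at \<Gamma> y (\<eta> y) = 0) \<and>
          (\<forall>y\<in>W. conn \<Gamma> \<eta> y = \<phi> y)))"

definition wedge_injective :: "(real^'n::finite \<Rightarrow> real^'r::finite^'r^'n) \<Rightarrow> (real^'n) set \<Rightarrow> bool" where
  "wedge_injective \<Gamma> U = (\<forall>V \<phi>. open V \<and> V \<subseteq> U \<and> smooth_on \<phi> V \<and>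
      (\<forall>x\<in>V. conn_wedge \<Gamma> \<phi> x = 0) \<longrightarrow> (\<forall>x\<in>V. \<phi> x = 0))"

definition curv_injective :: "(real^'n::finite \<Rightarrow> real^'r::finite^'r^'n) \<Rightarrow> (real^'n) set \<Rightarrow> bool" where
  "curv_injective \<Gamma> U = (\<forall>x\<in>U. inj (curv_at \<Gamma> x))"

end

theory Submission
  imports Defs
begin

lemma partial_at:
  "(f has_derivative f') (at x) \<Longrightarrow> partial i f x = f' (axis i 1)"
  unfolding partial_def by (metis frechet_derivative_at)

lemma partial_local:
  assumes "open W" "x \<in> W" "\<And>y. y \<in> W \<Longrightarrow> f y = g y"
  shows "partial i f x = partial i g x"
proof -
  have "(\<lambda>f'. (f has_derivative f') (at x)) = (\<lambda>f'. (g has_derivative f') (at x))"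
  proof (intro ext iffI)
    fix f' assume "(f has_derivative f') (at x)"
    then show "(g has_derivative f') (at x)"
      by (rule has_derivative_transform_within_open[OF _ assms(1,2)]) (rule assms(3))
  next
    fix f' assume "(g has_derivative f') (at x)"
    then show "(f has_derivative f') (at x)"
      by (rule has_derivative_transform_within_open[OF _ assms(1,2)]) (rule assms(3)[symmetric])
  qed
  then show ?thesis unfolding partial_def frechet_derivative_def by simp
qed

lemma partial_linear:
  assumes "bounded_linear L" "F differentiable at x"
  shows "partial i (\<lambda>y. L (F y)) x = L (partial i F x)"
proof -
  have "(F has_derivative frechet_derivative F (at x)) (at x)"
    using assms(2) frechet_derivative_works by blast
  from bounded_linear.has_derivative[OF assms(1) this] show ?thesis
    by (simp add: partial_at) (simp add: partial_def)
qed

lemma partial_bilinear: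
  assumes "bounded_bilinear P" "F differentiable at x" "G differentiable at x"
  shows "partial i (\<lambda>y. P (F y) (G y)) x = P (partial i F x) (G x) + P (F x) (partial i G x)"
proof -
  have "(F has_derivative frechet_derivative F (at x)) (at x)"
       "(G has_derivative frechet_derivative G (at x)) (at x)"
    using assms(2,3) frechet_derivative_works by blast+
  from bounded_bilinear.FDERIV[OF assms(1) this] show ?thesis
    by (simp add: partial_at) (simp add: partial_def add.commute)
qed

lemma partial_add:
  assumes "F differentiable at x" "G differentiable at x"
  shows "partial i (\<lambda>y. F y + G y) x = partial i F x + partial i G x"
proof -
  have "(F has_derivative frechet_derivative F (at x)) (at x)"
       "(G has_derivative frechet_derivative G (at x)) (at x)"
    using assms frechet_derivative_works by blast+
  from has_derivative_add[OF this] show ?thesis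
    by (simp add: partial_at) (simp add: partial_def)
qed

lemma partial_diff:
  assumes "F differentiable at x" "G differentiable at x"
  shows "partial i (\<lambda>y. F y - G y) x = partial i F x - partial i G x"
proof -
  have "(F has_derivative frechet_derivative F (at x)) (at x)"
       "(G has_derivative frechet_derivative G (at x)) (at x)"
    using assms frechet_derivative_works by blast+
  from has_derivative_diff[OF this] show ?thesis
    by (simp add: partial_at) (simp add: partial_def)
qed

lemma partial_const: "partial i (\<lambda>y. c) x = 0"
  by (rule partial_at[where f'="\<lambda>_. 0", simplified]) simp

lemma diff_linear: "bounded_linear L \<Longrightarrow> F differentiable at x \<Longrightarrow> (\<lambda>y. L (F y)) differentiable at x"
  unfolding differentiable_def using bounded_linear.has_derivative by blast

lemma diff_bilinear: "bounded_bilinear P \<Longrightarrow> F differentiable at x \<Longrightarrow> G differentiable at x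
   \<Longrightarrow> (\<lambda>y. P (F y) (G y)) differentiable at x"
  unfolding differentiable_def using bounded_bilinear.FDERIV by blast

lemma diff_cong_open:
  assumes "open U" "x \<in> U" "\<And>y. y \<in> U \<Longrightarrow> f y = g y" "f differentiable at x"
  shows "g differentiable at x"
  using assms unfolding differentiable_def by (meson has_derivative_transform_within_open)

lemma Ck_on_mono: "Ck_on (Suc k) f U \<Longrightarrow> Ck_on k f U"
proof (induction k arbitrary: f)
  case 0
  then show ?case by (simp add: differentiable_imp_continuous_on)
next
  case (Suc k)
  then show ?case by simp
qed

lemma Ck_on_subset: "Ck_on k f U \<Longrightarrow> W \<subseteq> U \<Longrightarrow> Ck_on k f W"
  by (induction k arbitrary: f) (auto intro: continuous_on_subset differentiable_on_subset)

lemma smooth_on_subset: "smooth_on f U \<Longrightarrow> W \<subseteq> U \<Longrightarrow> smooth_on f W"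
  unfolding smooth_on_def using Ck_on_subset by blast

lemma Ck_on_cong:
  assumes "open U" "\<And>x. x \<in> U \<Longrightarrow> f x = g x" "Ck_on k f U"
  shows "Ck_on k g U"
  using assms(2,3)
proof (induction k arbitrary: f g)
  case 0
  then show ?case using continuous_on_cong by (metis Ck_on.simps(1))
next
  case (Suc k)
  have "g differentiable_on U"
    using Suc.prems(1,2) diff_cong_open[OF assms(1), of _ f g]
    by (auto simp add: differentiable_on_eq_differentiable_at[OF assms(1)])
  moreover have "Ck_on k (partial i g) U" for i
  proof -
    have "Ck_on k (partial i f) U" using Suc.prems by simp
    moreover have "partial i f x = partial i g x" if "x \<in> U" for x
      using partial_local[OF assms(1) that] Suc.prems by blast
    ultimately show ?thesis using Suc.IH by blast
  qed
  ultimately show ?case by simp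
qed

lemma Ck_on_linear:
  assumes "open U" "bounded_linear L"
  shows "Ck_on k f U \<Longrightarrow> Ck_on k (\<lambda>x. L (f x)) U"
proof (induction k arbitrary: f)
  case 0
  then show ?case using assms(2) by (simp add: bounded_linear.continuous_on continuous_on_id' continuous_on_compose2)
next
  case (Suc k)
  have d: "\<forall>x\<in>U. f differentiable at x"
    using Suc.prems by (simp add: differentiable_on_eq_differentiable_at[OF assms(1)])
  have "(\<lambda>x. L (f x)) differentiable_on U"
    using d diff_linear[OF assms(2)] differentiable_on_eq_differentiable_at[OF assms(1)] by blast
  moreover have "Ck_on k (partial i (\<lambda>x. L (f x))) U" for i
  proof (rule Ck_on_cong[OF assms(1)])
    show "Ck_on k (\<lambda>x. L (partial i f x)) U" using Suc by simp
    show "L (partial i f x) = partial i (\<lambda>x. L (f x)) x" if "x \<in> U" for x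
      using partial_linear[OF assms(2)] d that by metis
  qed
  ultimately show ?case by simp
qed

lemma Ck_on_const: "Ck_on k (\<lambda>x. c) U"
proof (induction k arbitrary: c)
  case 0 then show ?case by simp
next
  case (Suc k) then show ?case by (simp add: partial_const[abs_def])
qed

lemma Ck_on_add:
  assumes "open U"
  shows "Ck_on k f U \<Longrightarrow> Ck_on k g U \<Longrightarrow> Ck_on k (\<lambda>x. f x + g x) U"
proof (induction k arbitrary: f g)
  case 0
  then show ?case by (simp add: continuous_on_add)
next
  case (Suc k)
  have d: "\<forall>x\<in>U. f differentiable at x" "\<forall>x\<in>U. g differentiable at x"
    using Suc.prems by (simp_all add: differentiable_on_eq_differentiable_at[OF assms(1)])
  have "(\<lambda>x. f x + g x) differentiable_on U"
    using d by (simp add: differentiable_on_eq_differentiable_at[OF assms(1)])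
  moreover have "Ck_on k (partial i (\<lambda>x. f x + g x)) U" for i
  proof (rule Ck_on_cong[OF assms(1)])
    show "Ck_on k (\<lambda>x. partial i f x + partial i g x) U" using Suc by simp
    show "partial i f x + partial i g x = partial i (\<lambda>x. f x + g x) x" if "x \<in> U" for x
      using partial_add d that by metis
  qed
  ultimately show ?case by simp
qed

lemma Ck_on_bilinear:
  assumes "open U" "bounded_bilinear P"
  shows "Ck_on k f U \<Longrightarrow> Ck_on k g U \<Longrightarrow> Ck_on k (\<lambda>x. P (f x) (g x)) U"
proof (induction k arbitrary: f g)
  case 0
  then show ?case using assms(2) by (simp add: bounded_bilinear.continuous_on)
next
  case (Suc k)
  have d: "\<forall>x\<in>U. f differentiable at x" "\<forall>x\<in>U. g differentiable at x"
    using Suc.prems by (simp_all add: differentiable_on_eq_differentiable_at[OF assms(1)])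
  have "(\<lambda>x. P (f x) (g x)) differentiable_on U"
    using d diff_bilinear[OF assms(2)] differentiable_on_eq_differentiable_at[OF assms(1)] by blast
  moreover have "Ck_on k (partial i (\<lambda>x. P (f x) (g x))) U" for i
  proof (rule Ck_on_cong[OF assms(1)])
    have "Ck_on k (partial i f) U" "Ck_on k (partial i g) U" "Ck_on k f U" "Ck_on k g U"
      using Suc.prems Ck_on_mono by auto
    then show "Ck_on k (\<lambda>x. P (partial i f x) (g x) + P (f x) (partial i g x)) U"
      using Suc.IH Ck_on_add[OF assms(1)] by blast
    show "P (partial i f x) (g x) + P (f x) (partial i g x) = partial i (\<lambda>x. P (f x) (g x)) x"
      if "x \<in> U" for x
      using partial_bilinear[OF assms(2)] d that by metis
  qed
  ultimately show ?case by simp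
qed



lemma line_deriv:
  fixes F :: "real^'n::finite \<Rightarrow> real"
  assumes "F differentiable at (p + t *\<^sub>R axis i 1)"
  shows "((\<lambda>s. F (p + s *\<^sub>R axis i 1)) has_real_derivative partial i F (p + t *\<^sub>R axis i 1)) (at t)"
proof -
  let ?F' = "frechet_derivative F (at (p + t *\<^sub>R axis i 1))"
  have h1: "((\<lambda>s. p + s *\<^sub>R axis i (1::real)) has_derivative (\<lambda>s. s *\<^sub>R axis i 1)) (at t)"
    by (auto intro!: derivative_eq_intros)
  have h2: "(F has_derivative ?F') (at (p + t *\<^sub>R axis i 1))"
    using assms frechet_derivative_works by blast
  have "((\<lambda>s. F (p + s *\<^sub>R axis i 1)) has_derivative (\<lambda>s. ?F' (s *\<^sub>R axis i 1))) (at t)"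
    using diff_chain_at[OF h1 h2] by (simp add: o_def)
  moreover have "(\<lambda>s. ?F' (s *\<^sub>R axis i 1)) = (*) (partial i F (p + t *\<^sub>R axis i 1))"
    using linear_cmul[OF has_derivative_linear[OF h2]] by (auto simp: partial_def)
  ultimately show ?thesis unfolding has_field_derivative_def by simp
qed

lemma mvt_line:
  fixes F :: "real^'n::finite \<Rightarrow> real" and G
  assumes "0 < h" "\<And>t. 0 \<le> t \<Longrightarrow> t \<le> h \<Longrightarrow> F differentiable at (p + t *\<^sub>R axis i 1)"
    "\<And>t. 0 \<le> t \<Longrightarrow> t \<le> h \<Longrightarrow> G differentiable at (q + t *\<^sub>R axis i 1)"
  shows "\<exists>\<tau>. 0 < \<tau> \<and> \<tau> < h \<and>
     (F (p + h *\<^sub>R axis i 1) - G (q + h *\<^sub>R axis i 1)) - (F p - G q)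
       = h * (partial i F (p + \<tau> *\<^sub>R axis i 1) - partial i G (q + \<tau> *\<^sub>R axis i 1))"
proof -
  have "\<exists>z. 0 < z \<and> z < h \<and>
     ((\<lambda>s. F (p + s *\<^sub>R axis i 1) - G (q + s *\<^sub>R axis i 1)) h - (\<lambda>s. F (p + s *\<^sub>R axis i 1) - G (q + s *\<^sub>R axis i 1)) 0
       = (h - 0) * (partial i F (p + z *\<^sub>R axis i 1) - partial i G (q + z *\<^sub>R axis i 1)))"
    by (rule MVT2[OF assms(1)]) (intro DERIV_diff line_deriv assms(2,3); simp)
  then show ?thesis by simp
qed



lemma delta_lemma:
  fixes f :: "real^'n::finite \<Rightarrow> real"
  assumes "0 < h"
    and inV: "\<And>s t. 0 \<le> s \<Longrightarrow> s \<le> h \<Longrightarrow> 0 \<le> t \<Longrightarrow> t \<le> h \<Longrightarrow> x + s *\<^sub>R axis a 1 + t *\<^sub>R axis b 1 \<in> V"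
    and df: "\<And>y. y \<in> V \<Longrightarrow> f differentiable at y"
    and dfa: "\<And>y. y \<in> V \<Longrightarrow> partial a f differentiable at y"
  shows "\<exists>s t. 0 < s \<and> s < h \<and> 0 < t \<and> t < h \<and>
     f (x + h *\<^sub>R axis a 1 + h *\<^sub>R axis b 1) - f (x + h *\<^sub>R axis a 1) - f (x + h *\<^sub>R axis b 1) + f x
      = h * h * partial b (partial a f) (x + s *\<^sub>R axis a 1 + t *\<^sub>R axis b 1)"
proof -
  have "\<exists>\<sigma>. 0 < \<sigma> \<and> \<sigma> < h \<and>
     (f ((x + h *\<^sub>R axis b 1) + h *\<^sub>R axis a 1) - f (x + h *\<^sub>R axis a 1)) - (f (x + h *\<^sub>R axis b 1) - f x)
       = h * (partial a f ((x + h *\<^sub>R axis b 1) + \<sigma> *\<^sub>R axis a 1) - partial a f (x + \<sigma> *\<^sub>R axis a 1))"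
  proof (rule mvt_line[OF assms(1)])
    fix t :: real assume "0 \<le> t" "t \<le> h"
    then show "f differentiable at (x + h *\<^sub>R axis b 1 + t *\<^sub>R axis a 1)"
      using df inV[of t h] assms(1) by (simp add: add_ac)
    show "f differentiable at (x + t *\<^sub>R axis a 1)"
      using df inV[of t 0] assms(1) \<open>0 \<le> t\<close> \<open>t \<le> h\<close> by simp
  qed
  then obtain \<sigma> where s: "0 < \<sigma>" "\<sigma> < h" and e1:
    "(f ((x + h *\<^sub>R axis b 1) + h *\<^sub>R axis a 1) - f (x + h *\<^sub>R axis a 1)) - (f (x + h *\<^sub>R axis b 1) - f x)
       = h * (partial a f ((x + h *\<^sub>R axis b 1) + \<sigma> *\<^sub>R axis a 1) - partial a f (x + \<sigma> *\<^sub>R axis a 1))"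
    by blast
  have "\<exists>\<tau>. 0 < \<tau> \<and> \<tau> < h \<and>
     (partial a f ((x + \<sigma> *\<^sub>R axis a 1) + h *\<^sub>R axis b 1) - (\<lambda>_. 0) ((x + \<sigma> *\<^sub>R axis a 1) + h *\<^sub>R axis b 1))
       - (partial a f (x + \<sigma> *\<^sub>R axis a 1) - (\<lambda>_. 0) (x + \<sigma> *\<^sub>R axis a 1))
       = h * (partial b (partial a f) ((x + \<sigma> *\<^sub>R axis a 1) + \<tau> *\<^sub>R axis b 1)
              - partial b (\<lambda>_. 0::real) ((x + \<sigma> *\<^sub>R axis a 1) + \<tau> *\<^sub>R axis b 1))"
  proof (rule mvt_line[OF assms(1)])
    fix t :: real assume "0 \<le> t" "t \<le> h"
    then show "partial a f differentiable at (x + \<sigma> *\<^sub>R axis a 1 + t *\<^sub>R axis b 1)"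
      using dfa inV[of \<sigma> t] s by simp
    show "(\<lambda>_. 0::real) differentiable at (x + \<sigma> *\<^sub>R axis a 1 + t *\<^sub>R axis b 1)" by simp
  qed
  then obtain \<tau> where t: "0 < \<tau>" "\<tau> < h" and e2:
     "partial a f ((x + \<sigma> *\<^sub>R axis a 1) + h *\<^sub>R axis b 1) - partial a f (x + \<sigma> *\<^sub>R axis a 1)
       = h * partial b (partial a f) ((x + \<sigma> *\<^sub>R axis a 1) + \<tau> *\<^sub>R axis b 1)"
    by (auto simp: partial_const)
  have "x + h *\<^sub>R axis b 1 + \<sigma> *\<^sub>R axis a 1 = x + \<sigma> *\<^sub>R axis a 1 + h *\<^sub>R axis b 1"
       "x + h *\<^sub>R axis b 1 + h *\<^sub>R axis a 1 = x + h *\<^sub>R axis a 1 + h *\<^sub>R axis b 1"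
    by (simp_all add: add_ac)
  then have "f (x + h *\<^sub>R axis a 1 + h *\<^sub>R axis b 1) - f (x + h *\<^sub>R axis a 1) - f (x + h *\<^sub>R axis b 1) + f x
      = h * h * partial b (partial a f) (x + \<sigma> *\<^sub>R axis a 1 + \<tau> *\<^sub>R axis b 1)"
    using e1 e2 by (simp add: algebra_simps)
  then show ?thesis using s t by blast
qed

lemma clairaut_real:
  fixes f :: "real^'n::finite \<Rightarrow> real"
  assumes "open V" "x \<in> V" "Ck_on 2 f V"
  shows "partial a (partial b f) x = partial b (partial a f) x"
proof (rule ccontr)
  assume ne: "partial a (partial b f) x \<noteq> partial b (partial a f) x"
  have C: "Ck_on (Suc (Suc 0)) f V" using assms(3) by (simp add: numeral_2_eq_2)
  have df: "\<And>y. y \<in> V \<Longrightarrow> f differentiable at y"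
   and dfi: "\<And>i y. y \<in> V \<Longrightarrow> partial i f differentiable at y"
   and cij: "\<And>i j. continuous_on V (partial j (partial i f))"
    using C by (auto simp: differentiable_on_eq_differentiable_at[OF assms(1)])
  let ?A = "partial b (partial a f)" and ?B = "partial a (partial b f)"
  define e where "e = \<bar>?A x - ?B x\<bar> / 2"
  have e: "e > 0" using ne by (simp add: e_def)
  have cA: "isCont ?A x" "isCont ?B x"
    using cij assms(1,2) continuous_on_eq_continuous_at by blast+
  obtain dA where dA: "dA > 0" "\<And>y. dist y x < dA \<Longrightarrow> dist (?A y) (?A x) < e"
    using cA(1) e unfolding continuous_at_eps_delta by (metis dist_commute)
  obtain dB where dB: "dB > 0" "\<And>y. dist y x < dB \<Longrightarrow> dist (?B y) (?B x) < e"
    using cA(2) e unfolding continuous_at_eps_delta by (metis dist_commute)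
  obtain r where r: "r > 0" "ball x r \<subseteq> V" using assms(1,2) open_contains_ball by blast
  define h where "h = min r (min dA dB) / 3"
  have h: "h > 0" using r dA dB by (simp add: h_def)
  have close: "dist (x + s *\<^sub>R axis a 1 + t *\<^sub>R axis b 1) x < min r (min dA dB)"
    if "0 \<le> s" "s \<le> h" "0 \<le> t" "t \<le> h" for s t :: real and a b :: 'n
  proof -
    have "dist (x + s *\<^sub>R axis a 1 + t *\<^sub>R axis b 1) x = norm (s *\<^sub>R axis a (1::real) + t *\<^sub>R axis b 1)"
      by (simp add: dist_norm)
    also have "\<dots> \<le> norm (s *\<^sub>R axis a (1::real)) + norm (t *\<^sub>R axis b (1::real))" by (rule norm_triangle_ineq)
    also have "\<dots> = s + t" using that by simp
    also have "\<dots> < min r (min dA dB)" using that h by (simp add: h_def)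
    finally show ?thesis .
  qed
  have inV: "x + s *\<^sub>R axis a' 1 + t *\<^sub>R axis b' 1 \<in> V"
    if "0 \<le> s" "s \<le> h" "0 \<le> t" "t \<le> h" for s t a' b'
    using close[OF that, of a' b'] r by (auto simp: dist_commute)
  obtain s1 t1 where st1: "0 < s1" "s1 < h" "0 < t1" "t1 < h" and E1:
    "f (x + h *\<^sub>R axis a 1 + h *\<^sub>R axis b 1) - f (x + h *\<^sub>R axis a 1) - f (x + h *\<^sub>R axis b 1) + f x
      = h * h * ?A (x + s1 *\<^sub>R axis a 1 + t1 *\<^sub>R axis b 1)"
    using delta_lemma[OF h inV df dfi] by blast
  obtain s2 t2 where st2: "0 < s2" "s2 < h" "0 < t2" "t2 < h" and E2:
    "f (x + h *\<^sub>R axis b 1 + h *\<^sub>R axis a 1) - f (x + h *\<^sub>R axis b 1) - f (x + h *\<^sub>R axis a 1) + f x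
      = h * h * ?B (x + s2 *\<^sub>R axis b 1 + t2 *\<^sub>R axis a 1)"
    using delta_lemma[OF h inV df dfi] by blast
  have "x + h *\<^sub>R axis b 1 + h *\<^sub>R axis a 1 = x + h *\<^sub>R axis a 1 + h *\<^sub>R axis b 1"
    by (simp add: add_ac)
  with E1 E2 have "h * h * ?A (x + s1 *\<^sub>R axis a 1 + t1 *\<^sub>R axis b 1) = h * h * ?B (x + s2 *\<^sub>R axis b 1 + t2 *\<^sub>R axis a 1)"
    by (metis (no_types, lifting) diff_diff_eq add.commute)
  with h have eq: "?A (x + s1 *\<^sub>R axis a 1 + t1 *\<^sub>R axis b 1) = ?B (x + s2 *\<^sub>R axis b 1 + t2 *\<^sub>R axis a 1)"
    by simp
  have "dist (?A (x + s1 *\<^sub>R axis a 1 + t1 *\<^sub>R axis b 1)) (?A x) < e"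
    using dA(2) close[of s1 t1 a b] st1 by simp
  moreover have "dist (?B (x + s2 *\<^sub>R axis b 1 + t2 *\<^sub>R axis a 1)) (?B x) < e"
    using dB(2) close[of s2 t2 b a] st2 by simp
  ultimately have "\<bar>?A x - ?B x\<bar> < 2 * e" using eq by (simp add: dist_real_def)
  then show False by (simp add: e_def)
qed



lemma Ck2_parts:
  assumes "open V" "Ck_on 2 \<psi> V"
  shows "\<And>y. y \<in> V \<Longrightarrow> \<psi> differentiable at y"
    and "\<And>i y. y \<in> V \<Longrightarrow> partial i \<psi> differentiable at y"
  using assms by (auto simp: numeral_2_eq_2 differentiable_on_eq_differentiable_at[OF assms(1)])

lemma clairaut:
  fixes \<psi> :: "real^'n::finite \<Rightarrow> real^'r::finite"
  assumes "open V" "x \<in> V" "Ck_on 2 \<psi> V"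
  shows "partial a (partial b \<psi>) x = partial b (partial a \<psi>) x"
proof -
  note d = Ck2_parts[OF assms(1,3)]
  have "partial a (partial b \<psi>) x $ k = partial b (partial a \<psi>) x $ k" for k
  proof -
    let ?f = "\<lambda>y. \<psi> y $ k"
    have Cf: "Ck_on 2 ?f V" using Ck_on_linear[OF assms(1) bounded_linear_vec_nth assms(3)] .
    have pf: "partial i ?f y = partial i \<psi> y $ k" if "y \<in> V" for i y
      using partial_linear[OF bounded_linear_vec_nth d(1)[OF that]] .
    have "partial a (partial b \<psi>) x $ k = partial a (\<lambda>y. partial b \<psi> y $ k) x"
      using partial_linear[OF bounded_linear_vec_nth d(2)[OF assms(2)]] by simp
    also have "\<dots> = partial a (partial b ?f) x"
      by (rule partial_local[OF assms(1,2)]) (simp add: pf)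
    also have "\<dots> = partial b (partial a ?f) x"
      using clairaut_real[OF assms(1,2) Cf] by simp
    also have "\<dots> = partial b (\<lambda>y. partial a \<psi> y $ k) x"
      by (rule partial_local[OF assms(1,2)]) (simp add: pf)
    also have "\<dots> = partial b (partial a \<psi>) x $ k"
      using partial_linear[OF bounded_linear_vec_nth d(2)[OF assms(2)]] by simp
    finally show ?thesis .
  qed
  then show ?thesis by (simp add: vec_eq_iff)
qed

lemma bounded_bilinear_mv: "bounded_bilinear (\<lambda>(M::real^'r::finite^'s::finite) (v::real^'r). M *v v)"
proof -
  have "bilinear (\<lambda>(M::real^'r^'s) (v::real^'r). M *v v)"
    unfolding bilinear_def
    by (auto intro!: linearI simp: matrix_vector_mult_add_rdistrib matrix_vector_right_distrib
        scaleR_matrix_vector_assoc matrix_vector_mult_scaleR)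
  then show ?thesis using bilinear_conv_bounded_bilinear by blast
qed

lemma curv_identity:
  fixes \<Gamma> :: "real^'n::finite \<Rightarrow> real^'r::finite^'r^'n" and \<psi> :: "real^'n \<Rightarrow> real^'r"
  assumes "open V" "x \<in> V" "Ck_on 2 \<psi> V" "\<Gamma> differentiable at x"
  shows "conn_wedge \<Gamma> (conn \<Gamma> \<psi>) x = curv_at \<Gamma> x (\<psi> x)"
proof -
  note d = Ck2_parts[OF assms(1,3)]
  have dG: "(\<lambda>y. \<Gamma> y $ b) differentiable at x" for b
    using diff_linear[OF bounded_linear_vec_nth assms(4)] .
  have pa: "partial a (\<lambda>y. conn \<Gamma> \<psi> y $ b) x = partial a (partial b \<psi>) x
      + (partial a (\<lambda>y. \<Gamma> y $ b) x *v \<psi> x + (\<Gamma> x $ b) *v partial a \<psi> x)" for a b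
  proof -
    have "(\<lambda>y. conn \<Gamma> \<psi> y $ b) = (\<lambda>y. partial b \<psi> y + (\<Gamma> y $ b) *v \<psi> y)"
      by (simp add: conn_def)
    moreover have "(\<lambda>y. (\<Gamma> y $ b) *v \<psi> y) differentiable at x"
      using diff_bilinear[OF bounded_bilinear_mv dG d(1)[OF assms(2)]] by simp
    moreover have "partial a (\<lambda>y. (\<Gamma> y $ b) *v \<psi> y) x
        = partial a (\<lambda>y. \<Gamma> y $ b) x *v \<psi> x + (\<Gamma> x $ b) *v partial a \<psi> x"
      using partial_bilinear[OF bounded_bilinear_mv dG d(1)[OF assms(2)]] by simp
    ultimately show ?thesis
      using partial_add[OF d(2)[OF assms(2)]] by simp
  qed
  have cl: "partial a (partial b \<psi>) x = partial b (partial a \<psi>) x" for a b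
    using clairaut[OF assms(1,2,3)] .
  have "conn_wedge \<Gamma> (conn \<Gamma> \<psi>) x $ a $ b = curv_at \<Gamma> x (\<psi> x) $ a $ b" for a b
  proof -
    have e1: "conn_wedge \<Gamma> (conn \<Gamma> \<psi>) x $ a $ b = (1/2) *\<^sub>R
      ((partial a (\<lambda>y. conn \<Gamma> \<psi> y $ b) x + (\<Gamma> x $ a) *v (partial b \<psi> x + (\<Gamma> x $ b) *v \<psi> x))
      - (partial b (\<lambda>y. conn \<Gamma> \<psi> y $ a) x + (\<Gamma> x $ b) *v (partial a \<psi> x + (\<Gamma> x $ a) *v \<psi> x)))"
      unfolding conn_wedge_def by (simp add: conn_def)
    have e2: "curv_at \<Gamma> x (\<psi> x) $ a $ b = (1/2) *\<^sub>R ((partial a (\<lambda>y. \<Gamma> y $ b) x *v \<psi> x)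
       - (partial b (\<lambda>y. \<Gamma> y $ a) x *v \<psi> x) + (\<Gamma> x $ a) *v ((\<Gamma> x $ b) *v \<psi> x)
       - (\<Gamma> x $ b) *v ((\<Gamma> x $ a) *v \<psi> x))"
      unfolding curv_at_def curv_def
      by (simp add: scaleR_matrix_vector_assoc[symmetric] matrix_vector_mul_assoc[symmetric] matrix_vector_mult_add_rdistrib
          matrix_vector_mult_diff_rdistrib)
    show ?thesis unfolding e1 e2 pa[of a b] pa[of b a] cl[of a b]
      by (simp add: matrix_vector_right_distrib algebra_simps)
  qed
  then show ?thesis by (simp add: vec_eq_iff)
qed



lemma smooth_Ck: "smooth_on f U \<Longrightarrow> Ck_on k f U"
  by (simp add: smooth_on_def)

lemma smooth_diff_at: "open U \<Longrightarrow> smooth_on f U \<Longrightarrow> x \<in> U \<Longrightarrow> f differentiable at x"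
  using smooth_Ck[of f U 1] by (simp add: differentiable_on_eq_differentiable_at)

lemma smooth_on_linear: "open U \<Longrightarrow> bounded_linear L \<Longrightarrow> smooth_on f U \<Longrightarrow> smooth_on (\<lambda>x. L (f x)) U"
  unfolding smooth_on_def using Ck_on_linear by blast

lemma smooth_on_add: "open U \<Longrightarrow> smooth_on f U \<Longrightarrow> smooth_on g U \<Longrightarrow> smooth_on (\<lambda>x. f x + g x) U"
  unfolding smooth_on_def using Ck_on_add by blast

lemma smooth_on_bilinear: "open U \<Longrightarrow> bounded_bilinear P \<Longrightarrow> smooth_on f U \<Longrightarrow> smooth_on g U
   \<Longrightarrow> smooth_on (\<lambda>x. P (f x) (g x)) U"
  unfolding smooth_on_def using Ck_on_bilinear by blast

lemma smooth_on_const: "smooth_on (\<lambda>x. c) U"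
  unfolding smooth_on_def using Ck_on_const by blast

lemma smooth_on_partial: "smooth_on f U \<Longrightarrow> smooth_on (partial i f) U"
  unfolding smooth_on_def by (metis Ck_on.simps(2))

lemma smooth_on_diff: "open U \<Longrightarrow> smooth_on f U \<Longrightarrow> smooth_on g U \<Longrightarrow> smooth_on (\<lambda>x. f x - g x) U"
proof -
  assume a: "open U" "smooth_on f U" "smooth_on g U"
  have "smooth_on (\<lambda>x. - g x) U"
    using smooth_on_linear[OF a(1) bounded_linear_minus[OF bounded_linear_ident] a(3)] .
  from smooth_on_add[OF a(1,2) this] show ?thesis by simp
qed

lemma smooth_on_sum:
  assumes "open U" "finite S" "\<And>a. a \<in> S \<Longrightarrow> smooth_on (G a) U"
  shows "smooth_on (\<lambda>x. \<Sum>a\<in>S. G a x) U"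
  using assms(2,3)
proof (induction S rule: finite_induct)
  case empty
  then show ?case by (simp add: smooth_on_const)
next
  case (insert a S)
  then show ?case using smooth_on_add[OF assms(1), of "G a" "\<lambda>x. \<Sum>a\<in>S. G a x"] by simp
qed

definition emb :: "'n::finite \<Rightarrow> 'b::real_vector \<Rightarrow> 'b^'n" where
  "emb a v = (\<chi> c. if c = a then v else 0)"

lemma bounded_linear_emb: "bounded_linear (emb a :: real^'r::finite \<Rightarrow> real^'r^'n::finite)"
proof -
  have "linear (emb a :: real^'r \<Rightarrow> real^'r^'n)"
    by (rule linearI) (auto simp: emb_def vec_eq_iff)
  then show ?thesis using linear_conv_bounded_linear by blast
qed

lemma smooth_on_vec:
  fixes F :: "'n::finite \<Rightarrow> real^'m::finite \<Rightarrow> real^'r::finite"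
  assumes "open U" "\<And>a. smooth_on (F a) U"
  shows "smooth_on (\<lambda>x. \<chi> a. F a x) U"
proof -
  have e: "(\<chi> a. F a x) = (\<Sum>a\<in>UNIV. emb a (F a x))" for x
    unfolding vec_eq_iff by (simp add: emb_def)
  have "smooth_on (\<lambda>x. emb a (F a x)) U" for a
    using smooth_on_linear[OF assms(1) bounded_linear_emb assms(2)] .
  then have "smooth_on (\<lambda>x. \<Sum>a\<in>UNIV. emb a (F a x)) U"
    by (intro smooth_on_sum[OF assms(1)]) auto
  then show ?thesis unfolding e .
qed

lemma smooth_conn:
  fixes \<Gamma> :: "real^'n::finite \<Rightarrow> real^'r::finite^'r^'n" and \<psi> :: "real^'n \<Rightarrow> real^'r"
  assumes "open V" "smooth_on \<Gamma> V" "smooth_on \<psi> V"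
  shows "smooth_on (conn \<Gamma> \<psi>) V"
proof -
  have "conn \<Gamma> \<psi> = (\<lambda>x. \<chi> a. partial a \<psi> x + (\<Gamma> x $ a) *v \<psi> x)"
    by (rule ext) (simp add: conn_def)
  moreover have "smooth_on (\<lambda>x. partial a \<psi> x + (\<Gamma> x $ a) *v \<psi> x) V" for a
  proof -
    have "smooth_on (\<lambda>x. \<Gamma> x $ a) V"
      using smooth_on_linear[OF assms(1) bounded_linear_vec_nth assms(2)] .
    then have "smooth_on (\<lambda>x. (\<Gamma> x $ a) *v \<psi> x) V"
      using smooth_on_bilinear[OF assms(1) bounded_bilinear_mv _ assms(3)] by blast
    then show ?thesis
      using smooth_on_add[OF assms(1) smooth_on_partial[OF assms(3)]] by blast
  qed
  then have "smooth_on (\<lambda>x. \<chi> a. partial a \<psi> x + (\<Gamma> x $ a) *v \<psi> x) V"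
    by (rule smooth_on_vec[OF assms(1)])
  ultimately show ?thesis by simp
qed

lemma wedge_diff:
  assumes "\<phi>1 differentiable at x" "\<phi>2 differentiable at x"
  shows "conn_wedge \<Gamma> (\<lambda>y. \<phi>1 y - \<phi>2 y) x = conn_wedge \<Gamma> \<phi>1 x - conn_wedge \<Gamma> \<phi>2 x"
proof -
  have p: "partial a (\<lambda>y. \<phi>1 y $ b - \<phi>2 y $ b) x = partial a (\<lambda>y. \<phi>1 y $ b) x - partial a (\<lambda>y. \<phi>2 y $ b) x" for a b
    using partial_diff[OF diff_linear[OF bounded_linear_vec_nth assms(1)] diff_linear[OF bounded_linear_vec_nth assms(2)]]
    by simp
  show ?thesis unfolding conn_wedge_def
    by (simp add: vec_eq_iff p matrix_vector_mult_diff_distrib algebra_simps)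
qed

lemma conn_add:
  assumes "\<eta>1 differentiable at x" "\<eta>2 differentiable at x"
  shows "conn \<Gamma> (\<lambda>y. \<eta>1 y + \<eta>2 y) x = conn \<Gamma> \<eta>1 x + conn \<Gamma> \<eta>2 x"
  unfolding conn_def using partial_add[OF assms]
  by (simp add: vec_eq_iff matrix_vector_right_distrib algebra_simps)

lemma wedge_local:
  assumes "open W" "x \<in> W" "\<And>y. y \<in> W \<Longrightarrow> \<phi> y = \<phi>' y"
  shows "conn_wedge \<Gamma> \<phi> x = conn_wedge \<Gamma> \<phi>' x"
proof -
  have p: "partial a (\<lambda>y. \<phi> y $ b) x = partial a (\<lambda>y. \<phi>' y $ b) x" for a b
    by (rule partial_local[OF assms(1,2)]) (simp add: assms(3))
  have "\<phi> x = \<phi>' x" using assms(3)[OF assms(2)] .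
  then show ?thesis unfolding conn_wedge_def by (simp only: p)
qed

lemma conn_local:
  assumes "open W" "x \<in> W" "\<And>y. y \<in> W \<Longrightarrow> \<eta> y = \<eta>' y"
  shows "conn \<Gamma> \<eta> x = conn \<Gamma> \<eta>' x"
proof -
  have p: "partial a \<eta> x = partial a \<eta>' x" for a
    by (rule partial_local[OF assms(1,2)]) (simp add: assms(3))
  have "\<eta> x = \<eta>' x" using assms(3)[OF assms(2)] .
  then show ?thesis unfolding conn_def by (simp only: p)
qed

lemma curv_at_zero: "curv_at \<Gamma> x 0 = 0"
  by (simp add: curv_at_def vec_eq_iff)

lemma conn_zero: "conn \<Gamma> (\<lambda>_. 0) x = 0"
  by (simp add: conn_def partial_const vec_eq_iff)

lemma curv_identity_smooth:
  assumes "open U" "smooth_on \<Gamma> U" "open W" "W \<subseteq> U" "smooth_on \<eta> W" "y \<in> W"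
  shows "conn_wedge \<Gamma> (conn \<Gamma> \<eta>) y = curv_at \<Gamma> y (\<eta> y)"
  using curv_identity[OF assms(3,6) smooth_Ck[OF assms(5)] smooth_diff_at[OF assms(1,2)]] assms(4,6)
  by blast

lemma key_diff:
  assumes "open U" "smooth_on \<Gamma> U" "open V" "V \<subseteq> U" "smooth_on \<phi> V" "smooth_on \<psi> V"
    "\<forall>x\<in>V. conn_wedge \<Gamma> \<phi> x = curv_at \<Gamma> x (\<psi> x)"
  shows "smooth_on (\<lambda>y. \<phi> y - conn \<Gamma> \<psi> y) V"
    and "\<forall>x\<in>V. conn_wedge \<Gamma> (\<lambda>y. \<phi> y - conn \<Gamma> \<psi> y) x = 0"
proof -
  have sc: "smooth_on (conn \<Gamma> \<psi>) V"
    using smooth_conn[OF assms(3) smooth_on_subset[OF assms(2,4)] assms(6)] .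
  show "smooth_on (\<lambda>y. \<phi> y - conn \<Gamma> \<psi> y) V" using smooth_on_diff[OF assms(3,5) sc] .
  show "\<forall>x\<in>V. conn_wedge \<Gamma> (\<lambda>y. \<phi> y - conn \<Gamma> \<psi> y) x = 0"
  proof
    fix x assume x: "x \<in> V"
    have "conn_wedge \<Gamma> (\<lambda>y. \<phi> y - conn \<Gamma> \<psi> y) x = conn_wedge \<Gamma> \<phi> x - conn_wedge \<Gamma> (conn \<Gamma> \<psi>) x"
      using wedge_diff[OF smooth_diff_at[OF assms(3,5) x] smooth_diff_at[OF assms(3) sc x]] .
    also have "\<dots> = 0"
      using assms(7) x curv_identity_smooth[OF assms(1,2,3,4,6) x] by simp
    finally show "conn_wedge \<Gamma> (\<lambda>y. \<phi> y - conn \<Gamma> \<psi> y) x = 0" .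
  qed
qed


theorem proposition2p4:
  fixes \<Gamma> :: "real^'n::finite \<Rightarrow> real^'r::finite^'r^'n" and U :: "(real^'n) set"
  assumes "open U" and "smooth_on \<Gamma> U" and "curv_const_rank \<Gamma> U"
  shows "(exact_conn \<Gamma> U \<longleftrightarrow> complex_exact \<Gamma> U)
       \<and> (wedge_injective \<Gamma> U \<longrightarrow> exact_conn \<Gamma> U)
       \<and> (exact_conn \<Gamma> U \<and> curv_injective \<Gamma> U \<longrightarrow> wedge_injective \<Gamma> U)"
proof -
  have P1: "complex_exact \<Gamma> U" if ex: "exact_conn \<Gamma> U"
    unfolding complex_exact_def
  proof (intro allI impI ballI)
    fix V \<phi> x
    assume h: "open V \<and> V \<subseteq> U \<and> smooth_on \<phi> V \<and> (\<forall>x\<in>V. conn_wedge \<Gamma> \<phi> x = 0)" and x: "x \<in> V"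
    from h have hV: "open V" "V \<subseteq> U" "smooth_on \<phi> V" "\<And>x. x \<in> V \<Longrightarrow> conn_wedge \<Gamma> \<phi> x = 0"
      by auto
    have w0: "\<forall>x\<in>V. conn_wedge \<Gamma> \<phi> x = curv_at \<Gamma> x ((\<lambda>_. 0) x)"
      using hV(4) by (simp add: curv_at_zero)
    have "\<forall>x\<in>V. \<exists>W \<eta>. open W \<and> x \<in> W \<and> W \<subseteq> V \<and> smooth_on \<eta> W \<and> (\<forall>y\<in>W. conn \<Gamma> \<eta> y = \<phi> y)"
      using ex[unfolded exact_conn_def, rule_format, of V \<phi> "\<lambda>_. 0"] hV(1,2,3) w0 smooth_on_const
      by blast
    from bspec[OF this x] obtain W \<eta> where W: "open W" "x \<in> W" "W \<subseteq> V" "smooth_on \<eta> W" "\<forall>y\<in>W. conn \<Gamma> \<eta> y = \<phi> y"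
      by (elim exE conjE) (intro that)
    have "curv_at \<Gamma> y (\<eta> y) = 0" if y: "y \<in> W" for y
    proof -
      have WU: "W \<subseteq> U" using W(3) hV(2) by blast
      have "curv_at \<Gamma> y (\<eta> y) = conn_wedge \<Gamma> (conn \<Gamma> \<eta>) y"
        using curv_identity_smooth[OF assms(1,2) W(1) WU W(4) y] by simp
      also have "\<dots> = conn_wedge \<Gamma> \<phi> y" using wedge_local[OF W(1) y] W(5) by blast
      also have "\<dots> = 0" using hV(4) W(3) y by blast
      finally show ?thesis .
    qed
    then show "\<exists>W \<eta>. open W \<and> x \<in> W \<and> W \<subseteq> V \<and> smooth_on \<eta> W \<and>
          (\<forall>y\<in>W. curv_at \<Gamma> y (\<eta> y) = 0) \<and> (\<forall>y\<in>W. conn \<Gamma> \<eta> y = \<phi> y)"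
      using W by blast
  qed
  have P2: "exact_conn \<Gamma> U" if ce: "complex_exact \<Gamma> U"
    unfolding exact_conn_def
  proof (intro allI impI ballI)
    fix V \<phi> \<psi> x
    assume h: "open V \<and> V \<subseteq> U \<and> smooth_on \<phi> V \<and> smooth_on \<psi> V \<and>
      (\<forall>x\<in>V. conn_wedge \<Gamma> \<phi> x = curv_at \<Gamma> x (\<psi> x))" and x: "x \<in> V"
    from h have hV: "open V" "V \<subseteq> U" "smooth_on \<phi> V" "smooth_on \<psi> V"
      "\<forall>x\<in>V. conn_wedge \<Gamma> \<phi> x = curv_at \<Gamma> x (\<psi> x)" by auto
    note k = key_diff[OF assms(1,2) hV]
    have "\<forall>x\<in>V. \<exists>W \<eta>. open W \<and> x \<in> W \<and> W \<subseteq> V \<and> smooth_on \<eta> W \<and>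
          (\<forall>y\<in>W. curv_at \<Gamma> y (\<eta> y) = 0) \<and> (\<forall>y\<in>W. conn \<Gamma> \<eta> y = \<phi> y - conn \<Gamma> \<psi> y)"
      using ce[unfolded complex_exact_def, rule_format, of V "\<lambda>y. \<phi> y - conn \<Gamma> \<psi> y"] hV(1,2) k
      by blast
    from bspec[OF this x] obtain W \<eta>0 where W: "open W" "x \<in> W" "W \<subseteq> V" "smooth_on \<eta>0 W"
        "\<forall>y\<in>W. conn \<Gamma> \<eta>0 y = \<phi> y - conn \<Gamma> \<psi> y"
      by (elim exE conjE) (intro that)
    have s: "smooth_on \<psi> W" using smooth_on_subset[OF hV(4) W(3)] .
    have "conn \<Gamma> (\<lambda>y. \<eta>0 y + \<psi> y) y = \<phi> y" if y: "y \<in> W" for y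
      using conn_add[OF smooth_diff_at[OF W(1,4) y] smooth_diff_at[OF W(1) s y]] W(5) y by simp
    moreover have "smooth_on (\<lambda>y. \<eta>0 y + \<psi> y) W" using smooth_on_add[OF W(1,4) s] .
    ultimately show "\<exists>W \<eta>. open W \<and> x \<in> W \<and> W \<subseteq> V \<and> smooth_on \<eta> W \<and> (\<forall>y\<in>W. conn \<Gamma> \<eta> y = \<phi> y)"
      using W(1,2,3) by (intro exI[of _ W] exI[of _ "\<lambda>y. \<eta>0 y + \<psi> y"]) blast
  qed
  have P3: "exact_conn \<Gamma> U" if wi: "wedge_injective \<Gamma> U"
    unfolding exact_conn_def
  proof (intro allI impI ballI)
    fix V \<phi> \<psi> x
    assume h: "open V \<and> V \<subseteq> U \<and> smooth_on \<phi> V \<and> smooth_on \<psi> V \<and>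
      (\<forall>x\<in>V. conn_wedge \<Gamma> \<phi> x = curv_at \<Gamma> x (\<psi> x))" and x: "x \<in> V"
    from h have hV: "open V" "V \<subseteq> U" "smooth_on \<phi> V" "smooth_on \<psi> V"
      "\<forall>x\<in>V. conn_wedge \<Gamma> \<phi> x = curv_at \<Gamma> x (\<psi> x)" by auto
    note k = key_diff[OF assms(1,2) hV]
    have "\<forall>y\<in>V. \<phi> y - conn \<Gamma> \<psi> y = 0"
      using wi[unfolded wedge_injective_def, rule_format, of V "\<lambda>y. \<phi> y - conn \<Gamma> \<psi> y"] hV(1,2) k
      by blast
    then have "\<forall>y\<in>V. conn \<Gamma> \<psi> y = \<phi> y" by simp
    then show "\<exists>W \<eta>. open W \<and> x \<in> W \<and> W \<subseteq> V \<and> smooth_on \<eta> W \<and> (\<forall>y\<in>W. conn \<Gamma> \<eta> y = \<phi> y)"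
      using hV(1,4) x by (intro exI[of _ V] exI[of _ \<psi>]) blast
  qed
  have P4: "wedge_injective \<Gamma> U" if ex: "exact_conn \<Gamma> U" and ci: "curv_injective \<Gamma> U"
    unfolding wedge_injective_def
  proof (intro allI impI ballI)
    fix V \<phi> x
    assume h: "open V \<and> V \<subseteq> U \<and> smooth_on \<phi> V \<and> (\<forall>x\<in>V. conn_wedge \<Gamma> \<phi> x = 0)" and x: "x \<in> V"
    have "\<forall>x\<in>V. \<exists>W \<eta>. open W \<and> x \<in> W \<and> W \<subseteq> V \<and> smooth_on \<eta> W \<and>
          (\<forall>y\<in>W. curv_at \<Gamma> y (\<eta> y) = 0) \<and> (\<forall>y\<in>W. conn \<Gamma> \<eta> y = \<phi> y)"
      using P1[OF ex, unfolded complex_exact_def, rule_format, of V \<phi>] h by blast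
    from bspec[OF this x] obtain W \<eta> where W: "open W" "x \<in> W" "W \<subseteq> V" "smooth_on \<eta> W"
        "\<forall>y\<in>W. curv_at \<Gamma> y (\<eta> y) = 0" "\<forall>y\<in>W. conn \<Gamma> \<eta> y = \<phi> y"
      by (elim exE conjE) (intro that)
    have "\<eta> y = 0" if y: "y \<in> W" for y
    proof -
      have "y \<in> U" using h W(3) y by blast
      then have "inj (curv_at \<Gamma> y)" using ci unfolding curv_injective_def by blast
      moreover have "curv_at \<Gamma> y (\<eta> y) = curv_at \<Gamma> y 0" using W(5) y by (simp add: curv_at_zero)
      ultimately show ?thesis by (rule injD)
    qed
    then have "conn \<Gamma> \<eta> x = conn \<Gamma> (\<lambda>_. 0) x" by (rule conn_local[OF W(1,2)])
    then have "conn \<Gamma> \<eta> x = 0" by (simp add: conn_zero)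
    then show "\<phi> x = 0" using W(2,6) by simp
  qed
  show ?thesis using P1 P2 P3 P4 by blast
qed

end
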